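(* Let $c,d>0$ and let $\mathcal R(c,d)=(0,c)\times(0,d)\subset\mathbb R^2$. Let $u$ be a real-valued Neumann eigenfunction of the Laplacian on $\mathcal R(c,d)$, i.e. $-\Delta u=\lambda u$ in $\mathcal R(c,d)$ for some $\lambda$, with $\frac{\partial u}{\partial \nu}=0$ on $\partial\mathcal R(c,d)$, where $\nu$ is the outward normal. If $u>0$ on $\partial\mathcal R(c,d)$, then $u$ is constant (necessarily a positive constant).
   Context: The Neumann eigenvalues of $\mathcal R(c,d)$ are $\lambda_{m,n}=\pi^2(m^2/c^2+n^2/d^2)$, $(m,n)\in\mathbb N_0^2$, with eigenfunctions $\cos(m\pi x/c)\cos(n\pi y/d)$; an eigenfunction for a (possibly degenerate) eigenvalue $\lambda$ is any nonzero real linear combination of those $\cos(m\pi x/c)\cos(n\pi y/d)$ with $\lambda_{m,n}=\lambda$. The eigenfunction is smooth up to the boundary, so its boundary values make sense. *)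

theory Defs
  imports "HOL-Analysis.Analysis"
begin

definition rect :: "real \<Rightarrow> real \<Rightarrow> (real \<times> real) set" where
  "rect c d = {0<..<c} \<times> {0<..<d}"

definition neumann_eigenvalue :: "real \<Rightarrow> real \<Rightarrow> nat \<Rightarrow> nat \<Rightarrow> real" where
  "neumann_eigenvalue c d m n = pi\<^sup>2 * (real m ^ 2 / c\<^sup>2 + real n ^ 2 / d\<^sup>2)"

definition neumann_modes :: "real \<Rightarrow> real \<Rightarrow> real \<Rightarrow> (nat \<times> nat) set" where
  "neumann_modes c d lam = {(m, n). neumann_eigenvalue c d m n = lam}"

definition neumann_eigenfunction ::
    "real \<Rightarrow> real \<Rightarrow> real \<Rightarrow> (real \<times> real \<Rightarrow> real) \<Rightarrow> bool" where
  "neumann_eigenfunction c d lam u \<longleftrightarrow>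
     (\<exists>a :: nat \<Rightarrow> nat \<Rightarrow> real.
        (\<exists>(m, n) \<in> neumann_modes c d lam. a m n \<noteq> 0) \<and>
        (\<forall>x y. u (x, y) =
           (\<Sum>(m, n) \<in> neumann_modes c d lam.
              a m n * cos (real m * pi * x / c) * cos (real n * pi * y / d))))"

end

theory Submission
  imports Defs
begin


lemma cos_integral_zero:
  assumes "k \<ge> 1" "d > 0"
  shows "((\<lambda>y. b * cos (real k * pi * y / d)) has_integral 0) {0..d}"
proof -
  define F where "F y = b * d / (real k * pi) * sin (real k * pi * y / d)" for y
  have "((\<lambda>y. b * cos (real k * pi * y / d)) has_integral (F d - F 0)) {0..d}"
  proof (rule fundamental_theorem_of_calculus)
    show "0 \<le> d" using assms by simp
    fix x assume "x \<in> {0..d}"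
    have "(F has_real_derivative b * cos (real k * pi * x / d)) (at x within {0..d})"
      unfolding F_def using assms
      by (auto intro!: derivative_eq_intros simp: field_simps)
    then show "(F has_vector_derivative b * cos (real k * pi * x / d)) (at x within {0..d})"
      by (simp add: has_real_derivative_iff_has_vector_derivative)
  qed
  moreover have "F d = 0" "F 0 = 0" unfolding F_def using assms
    by (auto simp: field_simps)
  ultimately show ?thesis by simp
qed

lemma pos_trig_false:
  assumes fin: "finite S" and f1: "\<forall>i\<in>S. f i \<ge> (1::nat)" and d: "d > 0"
    and pos: "\<forall>y\<in>{0..d}. (\<Sum>i\<in>S. b i * cos (real (f i) * pi * y / d)) > 0"
  shows False
proof -
  let ?g = "\<lambda>y. \<Sum>i\<in>S. b i * cos (real (f i) * pi * y / d)"
  have int: "(?g has_integral 0) {0..d}"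
    using has_integral_sum[OF fin, of "\<lambda>i y. b i * cos (real (f i) * pi * y / d)" "\<lambda>i. 0" "{0..d}"]
      cos_integral_zero f1 d by simp
  have cont: "continuous_on {0..d} ?g"
    by (intro continuous_intros) (use d in auto)
  have "?g 0 = 0"
    using has_integral_0_cbox_imp_0[of 0 d ?g 0] cont int pos d by (auto simp: less_imp_le)
  moreover have "?g 0 > 0" using pos d by (intro bspec[OF pos]) auto
  ultimately show False by simp
qed



lemma two_adic:
  fixes s t h :: nat
  assumes "s^2 + t^2 = (2^e * h)^2" "odd h"
  shows "2^e dvd s \<and> 2^e dvd t \<and> (odd (s div 2^e) \<longleftrightarrow> even (t div 2^e))"
  using assms
proof (induction e arbitrary: s t)
  case 0
  then have "odd (s^2 + t^2)" by simp
  then show ?case by auto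
next
  case (Suc e)
  have eq: "s^2 + t^2 = 4 * (2^e*h)^2" using Suc.prems(1) by (simp add: power_mult_distrib)
  have se: "even s"
  proof (rule ccontr)
    assume os: "odd s"
    have "even (s^2+t^2)" using eq by simp
    then have ot: "odd t" using os by auto
    obtain a where a: "s = 2*a+1" using os oddE by blast
    obtain b where b: "t = 2*b+1" using ot oddE by blast
    have e1: "s^2+t^2 = 4*(a*a+a+b*b+b) + 2" unfolding a b by (simp add: power2_eq_square algebra_simps)
    have e2: "(4*k+2) mod 4 = (2::nat)" for k by presburger
    have "(s^2+t^2) mod 4 = (4*(a*a+a+b*b+b) + 2) mod 4" by (simp only: e1)
    also have "\<dots> = 2" by (rule e2)
    finally have "(s^2+t^2) mod 4 = 2" .
    with eq show False by simp
  qed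
  have te: "even t"
  proof -
    have "even (s^2+t^2)" using eq by simp
    with se show ?thesis by auto
  qed
  obtain s1 where s1: "s = 2* s1" using se by blast
  obtain t1 where t1: "t = 2* t1" using te by blast
  have "s1^2 + t1^2 = (2^e*h)^2" using eq unfolding s1 t1 by (simp add: power_mult_distrib)
  from Suc.IH[OF this Suc.prems(2)] obtain
    "2^e dvd s1" "2^e dvd t1" "odd (s1 div 2^e) \<longleftrightarrow> even (t1 div 2^e)" by blast
  moreover have "s div 2^Suc e = s1 div 2^e" "t div 2^Suc e = t1 div 2^e"
    unfolding s1 t1 by (simp_all add: div_mult2_eq)
  ultimately show ?case unfolding s1 t1 by auto
qed

lemma odd_part: "(g::nat) \<noteq> 0 \<Longrightarrow> \<exists>e h. g = 2^e * h \<and> odd h"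
proof (induction g rule: less_induct)
  case (less g)
  show ?case
  proof (cases "odd g")
    case True then show ?thesis by (rule_tac x=0 in exI) auto
  next
    case False
    then obtain g' where g': "g = 2*g'" by blast
    with less.prems have "g' < g" "g' \<noteq> 0" by auto
    from less.IH[OF this] obtain e h where "g' = 2^e*h" "odd h" by blast
    then show ?thesis using g' by (rule_tac x="Suc e" in exI, rule_tac x=h in exI) auto
  qed
qed

lemma mode_cancel:
  fixes m n m0 n0 g h e :: nat and c d :: real
  assumes m0: "m0 \<ge> 1" and n0: "n0 \<ge> 1"
    and eq: "m^2*n0^2 + n^2*m0^2 = m0^2*n0^2"
    and g: "g = gcd m0 n0" and gh: "g = 2^e*h" and h: "odd h" and c: "c > 0" and d: "d > 0"
  shows "cos (real m * pi * (c / (real (m0 div g) * 2^e)) / c)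
       + cos (real n * pi * (d / (real (n0 div g) * 2^e)) / d) = 0"
proof -
  define p where "p = m0 div g"
  define q where "q = n0 div g"
  have g0: "g \<ge> 1" using g m0 by (simp add: Suc_le_eq)
  have m0e: "m0 = g * p" unfolding p_def g by simp
  have n0e: "n0 = g * q" unfolding q_def g by simp
  have p1: "p \<ge> 1" using m0 m0e by (cases p) auto
  have q1: "q \<ge> 1" using n0 n0e by (cases q) auto
  have cop: "coprime p q" unfolding p_def q_def g using div_gcd_coprime[of m0 n0] m0 by auto
  have "g^2 * (m^2*q^2 + n^2*p^2) = g^2 * (g^2*p^2*q^2)"
    using eq unfolding m0e n0e by (simp add: power_mult_distrib algebra_simps)
  then have eq2: "m^2*q^2 + n^2*p^2 = g^2*p^2*q^2" using g0 by simp
  have "p^2 dvd m^2*q^2"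
  proof -
    have "p^2 dvd g^2*p^2*q^2 - n^2*p^2" by (simp add: dvd_diff_nat)
    moreover have "g^2*p^2*q^2 - n^2*p^2 = m^2*q^2" using eq2 by simp
    ultimately show ?thesis by simp
  qed
  then have "p^2 dvd m^2" using cop by (simp add: coprime_dvd_mult_left_iff)
  then have "p dvd m" by simp
  then obtain sa where s: "m = p* sa" by blast
  have "q^2 dvd n^2*p^2"
  proof -
    have "q^2 dvd g^2*p^2*q^2 - m^2*q^2" by (simp add: dvd_diff_nat)
    moreover have "g^2*p^2*q^2 - m^2*q^2 = n^2*p^2" using eq2 by simp
    ultimately show ?thesis by simp
  qed
  then have "q^2 dvd n^2" using cop by (simp add: coprime_dvd_mult_left_iff coprime_commute)
  then have "q dvd n" by simp
  then obtain ta where t: "n = q* ta" by blast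
  have "p^2*q^2*(sa^2+ta^2) = p^2*q^2*g^2" using eq2 unfolding s t by (simp add: power_mult_distrib algebra_simps)
  then have st: "sa^2+ta^2 = (2^e*h)^2" using p1 q1 gh by simp
  from two_adic[OF st h] have d1: "2^e dvd sa" and d2: "2^e dvd ta"
    and par0: "odd (sa div 2^e) \<longleftrightarrow> even (ta div 2^e)" by auto
  define s2 where "s2 = sa div 2^e"
  define t2 where "t2 = ta div 2^e"
  have s2: "sa = 2^e * s2" using d1 unfolding s2_def by simp
  have t2: "ta = 2^e * t2" using d2 unfolding t2_def by simp
  have par: "odd s2 \<longleftrightarrow> even t2" using par0 unfolding s2_def t2_def .
  have A: "real m * pi * (c / (real p * 2^e)) / c = real s2 * pi"
    using c p1 unfolding s s2 by (simp add: field_simps)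
  have B: "real n * pi * (d / (real q * 2^e)) / d = real t2 * pi"
    using d q1 unfolding t t2 by (simp add: field_simps)
  show ?thesis unfolding p_def[symmetric] q_def[symmetric] A B
    using par by (auto simp: neg_one_odd_power neg_one_even_power)
qed


lemma modes_finite:
  assumes c: "c > 0" and d: "d > 0"
  shows "finite (neumann_modes c d lam)"
proof -
  define K where "K = nat \<lceil>lam * (c^2 + d^2) / pi^2\<rceil>"
  have "neumann_modes c d lam \<subseteq> {0..K} \<times> {0..K}"
  proof
    fix p assume "p \<in> neumann_modes c d lam"
    then obtain m n where p: "p = (m, n)" and e: "pi^2 * (real m ^ 2 / c^2 + real n ^ 2 / d^2) = lam"
      by (auto simp: neumann_modes_def neumann_eigenvalue_def)
    have pi2: "pi^2 > 0" by simp
    have mm: "real m ^2 / c^2 \<le> lam / pi^2" "real n ^2 / d^2 \<le> lam / pi^2"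
      using e pi2 by (auto simp: field_simps)
    have "real m \<le> real m ^ 2" by (cases m) (auto simp: power2_eq_square)
    also have "\<dots> \<le> c^2 * (lam / pi^2)" using mm(1) c by (simp add: field_simps)
    also have "\<dots> \<le> lam * (c^2 + d^2) / pi^2"
    proof -
      have "lam \<ge> 0" unfolding e[symmetric] by (intro mult_nonneg_nonneg add_nonneg_nonneg divide_nonneg_nonneg) auto
      then show ?thesis by (simp add: field_simps)
    qed
    finally have 1: "m \<le> K" unfolding K_def by linarith
    have "real n \<le> real n ^ 2" by (cases n) (auto simp: power2_eq_square)
    also have "\<dots> \<le> d^2 * (lam / pi^2)" using mm(2) d by (simp add: field_simps)
    also have "\<dots> \<le> lam * (c^2 + d^2) / pi^2"
    proof -
      have "lam \<ge> 0" unfolding e[symmetric] by (intro mult_nonneg_nonneg add_nonneg_nonneg divide_nonneg_nonneg) auto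
      then show ?thesis by (simp add: field_simps)
    qed
    finally have 2: "n \<le> K" unfolding K_def by linarith
    show "p \<in> {0..K} \<times> {0..K}" using 1 2 p by auto
  qed
  then show ?thesis by (rule finite_subset) auto
qed

theorem theorem1p1:
  fixes c d lam :: real and u :: "real \<times> real \<Rightarrow> real"
  assumes "c > 0" and "d > 0"
    and "neumann_eigenfunction c d lam u"
    and "\<forall>p \<in> frontier (rect c d). u p > 0"
  shows "\<exists>k > 0. \<forall>p \<in> closure (rect c d). u p = k"
proof -
  note c = assms(1) and d = assms(2) and pos = assms(4)
  define M where "M = neumann_modes c d lam"
  obtain a where nz: "\<exists>(m, n) \<in> M. a m n \<noteq> 0" and
    ueq: "\<And>x y. u (x, y) = (\<Sum>(m, n) \<in> M. a m n * cos (real m * pi * x / c) * cos (real n * pi * y / d))"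
    using assms(3) unfolding neumann_eigenfunction_def M_def by blast
  have fin: "finite M" unfolding M_def using modes_finite c d by blast
  have memM: "(m, n) \<in> M \<longleftrightarrow> pi^2 * (real m ^ 2 / c^2 + real n ^ 2 / d^2) = lam" for m n
    unfolding M_def neumann_modes_def neumann_eigenvalue_def by simp
  have clos: "closure (rect c d) = {0..c} \<times> {0..d}"
    unfolding rect_def closure_Times using c d by simp
  have int: "interior (rect c d) = rect c d"
    unfolding rect_def by (simp add: interior_open open_Times)
  have fr1: "(x, 0) \<in> frontier (rect c d)" if "x \<in> {0..c}" for x
    unfolding frontier_def clos int using that d by (auto simp: rect_def)
  have fr2: "(0, y) \<in> frontier (rect c d)" if "y \<in> {0..d}" for y
    unfolding frontier_def clos int using that c by (auto simp: rect_def)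
  have posx: "u (x, 0) > 0" if "x \<in> {0..c}" for x using pos fr1[OF that] by blast
  have posy: "u (0, y) > 0" if "y \<in> {0..d}" for y using pos fr2[OF that] by blast
  show ?thesis
  proof (cases "(0, 0) \<in> M")
    case True
    then have lam0: "lam = 0" using memM by simp
    have Meq: "M = {(0, 0)}"
    proof -
      have "m = 0 \<and> n = 0" if "(m, n) \<in> M" for m n
      proof -
        have e: "real m ^ 2 / c^2 + real n ^ 2 / d^2 = 0" using that memM lam0 by simp
        have "real m ^ 2 / c^2 \<ge> 0" "real n ^ 2 / d^2 \<ge> 0" by simp_all
        then have "real m ^ 2 / c^2 = 0" "real n ^ 2 / d^2 = 0" using e by linarith+
        then show ?thesis using c d by simp
      qed
      then show ?thesis using True by auto
    qed
    have uc: "u p = a 0 0" for p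
      using ueq[of "fst p" "snd p"] unfolding Meq by simp
    have "a 0 0 > 0" using posx[of 0] c uc by simp
    then show ?thesis using uc by blast
  next
    case False
    have nz1: "m \<ge> 1 \<or> n \<ge> 1" if "(m, n) \<in> M" for m n
      using that False by (cases m; cases n) auto
    show ?thesis
    proof (cases "\<exists>m. (m, 0) \<in> M")
      case False2: False
      have "\<forall>i\<in>M. snd i \<ge> 1"
      proof
        fix i assume i: "i \<in> M"
        show "snd i \<ge> 1"
        proof (rule ccontr)
          assume "\<not> snd i \<ge> 1" then have si: "snd i = 0" by simp
          then have "(fst i, 0) \<in> M" using i si by (cases i) simp
          with False2 show False by blast
        qed
      qed
      moreover have "\<forall>y\<in>{0..d}. (\<Sum>i\<in>M. a (fst i) (snd i) * cos (real (snd i) * pi * y / d)) > 0"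
      proof
        fix y assume y: "y \<in> {0..d}"
        have "u (0, y) = (\<Sum>i\<in>M. a (fst i) (snd i) * cos (real (snd i) * pi * y / d))"
          unfolding ueq by (simp add: case_prod_beta)
        then show "(\<Sum>i\<in>M. a (fst i) (snd i) * cos (real (snd i) * pi * y / d)) > 0"
          using posy[OF y] by simp
      qed
      ultimately have False by (rule pos_trig_false[OF fin _ d])
        then show ?thesis by simp
    next
      case True2: True
      then obtain m0 where m0: "(m0, 0) \<in> M" by blast
      show ?thesis
      proof (cases "\<exists>n. (0, n) \<in> M")
        case False3: False
        have "\<forall>i\<in>M. fst i \<ge> 1"
      proof
        fix i assume i: "i \<in> M"
        show "fst i \<ge> 1"
        proof (rule ccontr)
          assume "\<not> fst i \<ge> 1" then have fi: "fst i = 0" by simp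
          then have "(0, snd i) \<in> M" using i fi by (cases i) simp
          with False3 show False by blast
        qed
      qed
        moreover have "\<forall>x\<in>{0..c}. (\<Sum>i\<in>M. a (fst i) (snd i) * cos (real (fst i) * pi * x / c)) > 0"
        proof
          fix x assume x: "x \<in> {0..c}"
          have "u (x, 0) = (\<Sum>i\<in>M. a (fst i) (snd i) * cos (real (fst i) * pi * x / c))"
            unfolding ueq by (simp add: case_prod_beta)
          then show "(\<Sum>i\<in>M. a (fst i) (snd i) * cos (real (fst i) * pi * x / c)) > 0"
            using posx[OF x] by simp
        qed
        ultimately have False by (rule pos_trig_false[OF fin _ c])
        then show ?thesis by simp
      next
        case True3: True
        then obtain n0 where n0: "(0, n0) \<in> M" by blast
        have m01: "m0 \<ge> 1" using nz1[OF m0] by simp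
        have n01: "n0 \<ge> 1" using nz1[OF n0] by simp
        define g where "g = gcd m0 n0"
        have "g \<noteq> 0" unfolding g_def using m01 by simp
        then obtain e h where gh: "g = 2^e * h" and h: "odd h" using odd_part by blast
        define x0 where "x0 = c / (real (m0 div g) * 2^e)"
        define y0 where "y0 = d / (real (n0 div g) * 2^e)"
        have eqmn: "m^2*n0^2 + n^2*m0^2 = m0^2*n0^2" if "(m, n) \<in> M" for m n
        proof -
          define X where "X = pi^2 / c^2"
          define Y where "Y = pi^2 / d^2"
          define A where "A = real m0 ^ 2"
          define B where "B = real n0 ^ 2"
          define M2 where "M2 = real m ^ 2"
          define N2 where "N2 = real n ^ 2"
          have e1: "A * X = lam" using m0 memM unfolding A_def X_def by (simp add: mult.commute)
          have e2: "B * Y = lam" using n0 memM unfolding B_def Y_def by (simp add: mult.commute)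
          have e3': "pi^2 * (real m ^ 2 / c^2 + real n ^ 2 / d^2) = lam" using that memM by simp
          have e3: "M2 * X + N2 * Y = lam" unfolding M2_def N2_def X_def Y_def
            using e3' by (simp add: algebra_simps)
          have lpos: "lam \<noteq> 0" unfolding e1[symmetric] A_def X_def using m01 c by simp
          have "lam * (M2*B + N2*A) = M2*B*lam + N2*A*lam" by (simp add: algebra_simps)
          also have "\<dots> = M2*B*(A*X) + N2*A*(B*Y)" by (simp only: e1 e2)
          also have "\<dots> = A*B*(M2*X + N2*Y)" by (simp add: algebra_simps)
          also have "\<dots> = lam * (A*B)" by (simp only: e3 mult.commute)
          finally have "M2*B + N2*A = A*B" using lpos by simp
          then have "real m ^ 2 * real n0 ^ 2 + real n ^ 2 * real m0 ^ 2 = real m0 ^ 2 * real n0 ^ 2"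
            unfolding M2_def N2_def A_def B_def .
          then have "real (m^2*n0^2 + n^2*m0^2) = real (m0^2*n0^2)" by simp
          then show ?thesis by (simp only: of_nat_eq_iff)
        qed
        have canc: "cos (real m * pi * x0 / c) + cos (real n * pi * y0 / d) = 0" if "(m, n) \<in> M" for m n
          unfolding x0_def y0_def
          using mode_cancel[OF m01 n01 eqmn[OF that] g_def gh h c d] .
        have "u (x0, 0) + u (0, y0) = (\<Sum>(m, n) \<in> M. a m n * (cos (real m * pi * x0 / c) + cos (real n * pi * y0 / d)))"
          unfolding ueq by (simp add: sum.distrib[symmetric] case_prod_beta algebra_simps)
        also have "\<dots> = 0" using canc by (intro sum.neutral) auto
        finally have sum0: "u (x0, 0) + u (0, y0) = 0" .
        have g1: "real (m0 div g) \<ge> 1" "real (n0 div g) \<ge> 1"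
          unfolding g_def using m01 n01
          by (simp_all add: Suc_le_eq div_greater_zero_iff gcd_le1_nat gcd_le2_nat)
        have "x0 \<in> {0..c}"
        proof -
          have "(1::real) \<le> 2^e" by simp
          then have D: "1 * 1 \<le> real (m0 div g) * 2^e" using g1(1) by (intro mult_mono) auto
          have "c \<le> c * (real (m0 div g) * 2^e)" using mult_left_mono[OF D, of c] c by simp
          then show ?thesis unfolding x0_def using D c by (simp add: divide_le_eq)
        qed
        moreover have "y0 \<in> {0..d}"
        proof -
          have "(1::real) \<le> 2^e" by simp
          then have D: "1 * 1 \<le> real (n0 div g) * 2^e" using g1(2) by (intro mult_mono) auto
          have "d \<le> d * (real (n0 div g) * 2^e)" using mult_left_mono[OF D, of d] d by simp
          then show ?thesis unfolding y0_def using D d by (simp add: divide_le_eq)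
        qed
        ultimately have "u (x0, 0) > 0" "u (0, y0) > 0" using posx posy by auto
        with sum0 show ?thesis by simp
      qed
    qed
  qed
qed

end
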